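(* Let $n_h\ge1$, $n_o\ge 2$, $n=n_o+n_h-1$, and let $A^{m(n)T}$, $G^{m(n)}$, $B^{m(n)T}$ be the modified Toom-Cook matrices built from $A^{(n-1)T}$, $G^{(n-1)}$, $B^{(n-1)T}$ as in the context. For $h\in F^{n_h}$, $x\in F^n$ let $s^{m(n)}=A^{m(n)T}(G^{m(n)}h\odot B^{m(n)T}x)$ be the exact value, $\hat s^{m(n)}$ the floating point value computed as in the context, and $x^{(n-1)}=(x_1,\dots,x_{n-1})^T$. Then for $q=1,\dots,n_o-1$, $$|\hat s^{m(n)}_q-s^{m(n)}_q|\le |A^{(n-1)T}_{q,:}|\big(|G^{(n-1)}|\,|h|\odot|B^{(n-1)T}|\,|x^{(n-1)}|\big)\big(\gamma^{(n_h)}+\beta^{(n-1)}+\alpha^{(n-1)}+1\big)\varepsilon+O(\varepsilon^2),$$ and for $q=n_o$, $$|\hat s^{m(n)}_{n_o}-s^{m(n)}_{n_o}|\le\Big(|A^{(n-1)T}_{n_o,:}|\big(|G^{(n-1)}|\,|h|\odot|B^{(n-1)T}|\,|x^{(n-1)}|\big)+|h_{n_h}|\,|B^{m(n)T}_{n,:}|\,|x|\Big)\Big(\max\{\gamma^{(n_h)}+\beta^{(n-1)}+\alpha^{(n-1)}+1,\ \beta^{(n)}+1\}+1\Big)\varepsilon+O(\varepsilon^2).$$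
   Context: Let $p_1,\dots,p_{n-1}$ be distinct reals, $N_i=1/\prod_{j\ne i,\,j\le n-1}(p_i-p_j)$, $M_{i,j}$ the coefficient of $a^{j-1}$ in $\prod_{k\ne i,\,k\le n-1}(a-p_k)$, and $M_j$ ($j=1,\dots,n$) the coefficient of $a^{j-1}$ in $\prod_{k=1}^{n-1}(a-p_k)$ (so $M_n=1$). Define $A^{(n-1)T}\in\mathbb{R}^{n_o\times(n-1)}$ by $A^{(n-1)T}_{i,j}=p_j^{i-1}$, $G^{(n-1)}\in\mathbb{R}^{(n-1)\times n_h}$ by $G^{(n-1)}_{i,j}=p_i^{j-1}N_i$, $B^{(n-1)T}\in\mathbb{R}^{(n-1)\times(n-1)}$ by $B^{(n-1)T}_{i,j}=M_{j,i}$. The modified matrices are: $G^{m(n)}\in\mathbb{R}^{n\times n_h}$ equals $G^{(n-1)}$ with an appended last row $(0,\dots,0,1)$; $A^{m(n)T}\in\mathbb{R}^{n_o\times n}$ equals $A^{(n-1)T}$ with an appended last column $(0,\dots,0,1)^T$; $B^{m(n)T}\in\mathbb{R}^{n\times n}$ has upper-left block $B^{(n-1)T}$, last column zero in rows $1,\dots,n-1$, and last row $(M_1,\dots,M_n)$. $M_{q,:}$ denotes row $q$ of a matrix $M$. Floating point model: set $F$, unit roundoff $\varepsilon$, no overflow, $fl(y\,\mathrm{op}\,z)=(y\,\mathrm{op}\,z)(1+\delta)$, $fl(y)=y(1+\delta)$, $|\delta|\le\varepsilon$; matrix entries stored rounded. Computation: $u=fl(fl(G^{(n-1)})h)$, $v=fl(fl(B^{(n-1)T})x^{(n-1)})$,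 $w_i=fl(u_iv_i)$ ($i\le n-1$); for $q<n_o$, $\hat s^{m(n)}_q=fl(fl(A^{(n-1)T}_{q,:})w)$; for $q=n_o$, $\hat s^{m(n)}_{n_o}=fl\big(fl(fl(A^{(n-1)T}_{n_o,:})w)+fl(h_{n_h}\,fl(fl(B^{m(n)T}_{n,:})x))\big)$ (structural zeros and ones are not multiplied). Constants: $\gamma^{(n_h)}$, $\beta^{(n-1)}$, $\alpha^{(n-1)}$, $\beta^{(n)}$ are such that for every row $a^T$ of $G^{(n-1)}$, of $B^{(n-1)T}$, of $A^{(n-1)T}$, and for the row $B^{m(n)T}_{n,:}$ respectively, and every floating point vector $y$ of matching length, $|a^Ty-fl(fl(a^T)y)|\le |a^T||y|\,c\,\varepsilon+O(\varepsilon^2)$ with the respective $c$. $|\cdot|$ is entrywise absolute value, $\odot$ the Hadamard product. *)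

theory Defs
  imports Complex_Main "HOL-Computational_Algebra.Polynomial"
begin

text \<open>All vectors and matrices are 1-indexed functions on nat.
  The parameter m stands for n-1 = n_o + n_h - 2 (the number of interpolation points).\<close>

definition tcN :: "(nat \<Rightarrow> real) \<Rightarrow> nat \<Rightarrow> nat \<Rightarrow> real" where
  "tcN p m i = 1 / (\<Prod>j\<in>{1..m} - {i}. (p i - p j))"

definition tcMi :: "(nat \<Rightarrow> real) \<Rightarrow> nat \<Rightarrow> nat \<Rightarrow> nat \<Rightarrow> real" where
  "tcMi p m i j = coeff (\<Prod>k\<in>{1..m} - {i}. [:- p k, 1:]) (j - 1)"

definition tcM :: "(nat \<Rightarrow> real) \<Rightarrow> nat \<Rightarrow> nat \<Rightarrow> real" where
  "tcM p m j = coeff (\<Prod>k\<in>{1..m}. [:- p k, 1:]) (j - 1)"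

definition tcAT :: "(nat \<Rightarrow> real) \<Rightarrow> nat \<Rightarrow> nat \<Rightarrow> real" where
  "tcAT p i j = p j ^ (i - 1)"

definition tcG :: "(nat \<Rightarrow> real) \<Rightarrow> nat \<Rightarrow> nat \<Rightarrow> nat \<Rightarrow> real" where
  "tcG p m i j = p i ^ (j - 1) * tcN p m i"

definition tcBT :: "(nat \<Rightarrow> real) \<Rightarrow> nat \<Rightarrow> nat \<Rightarrow> nat \<Rightarrow> real" where
  "tcBT p m i j = tcMi p m j i"

definition tcGm :: "(nat \<Rightarrow> real) \<Rightarrow> nat \<Rightarrow> nat \<Rightarrow> nat \<Rightarrow> nat \<Rightarrow> real" where
  "tcGm p m nh i j = (if i = m + 1 then (if j = nh then 1 else 0) else tcG p m i j)"

definition tcATm :: "(nat \<Rightarrow> real) \<Rightarrow> nat \<Rightarrow> nat \<Rightarrow> nat \<Rightarrow> nat \<Rightarrow> real" where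
  "tcATm p m no i j = (if j = m + 1 then (if i = no then 1 else 0) else tcAT p i j)"

definition tcBTm :: "(nat \<Rightarrow> real) \<Rightarrow> nat \<Rightarrow> nat \<Rightarrow> nat \<Rightarrow> real" where
  "tcBTm p m i j = (if i = m + 1 then tcM p m j else if j = m + 1 then 0 else tcBT p m i j)"

definition exact_s :: "(nat \<Rightarrow> real) \<Rightarrow> nat \<Rightarrow> nat \<Rightarrow> (nat \<Rightarrow> real) \<Rightarrow> (nat \<Rightarrow> real) \<Rightarrow> nat \<Rightarrow> real" where
  "exact_s p nh no h x q =
     (let n = no + nh - 1; m = n - 1 in
      \<Sum>j=1..n. tcATm p m no q j *
        ((\<Sum>k=1..nh. tcGm p m nh j k * h k) * (\<Sum>k=1..n. tcBTm p m j k * x k)))"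

definition fp_model :: "real set \<Rightarrow> real \<Rightarrow> (real \<Rightarrow> real \<Rightarrow> real) \<Rightarrow> (real \<Rightarrow> real \<Rightarrow> real) \<Rightarrow> bool" where
  "fp_model F eps fmul fadd \<longleftrightarrow> 0 < eps \<and>
     (\<forall>y\<in>F. \<forall>z\<in>F. fmul y z \<in> F \<and> (\<exists>d. \<bar>d\<bar> \<le> eps \<and> fmul y z = (y * z) * (1 + d))) \<and>
     (\<forall>y\<in>F. \<forall>z\<in>F. fadd y z \<in> F \<and> (\<exists>d. \<bar>d\<bar> \<le> eps \<and> fadd y z = (y + z) * (1 + d)))"

text \<open>fdot a len y is the floating point value fl(fl(a^T) y) of the dot product of the
  (exact) row a (entries a 1..a len, stored rounded) with the floating point vector y.
  dot_err states the defining property of the constants gamma, beta, alpha: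
  |a^T y - fl(fl(a^T) y)| <= |a^T| |y| c eps + O(eps^2), the O(eps^2) term read
  as |a^T| |y| K0 eps^2 with K0 independent of eps and y.\<close>
definition dot_err :: "real set \<Rightarrow> real \<Rightarrow> ((nat \<Rightarrow> real) \<Rightarrow> nat \<Rightarrow> (nat \<Rightarrow> real) \<Rightarrow> real)
     \<Rightarrow> (nat \<Rightarrow> real) \<Rightarrow> nat \<Rightarrow> real \<Rightarrow> real \<Rightarrow> bool" where
  "dot_err F eps fdot a len c K0 \<longleftrightarrow>
     (\<forall>y. (\<forall>j\<in>{1..len}. y j \<in> F) \<longrightarrow>
        fdot a len y \<in> F \<and>
        \<bar>(\<Sum>j=1..len. a j * y j) - fdot a len y\<bar>
          \<le> (\<Sum>j=1..len. \<bar>a j\<bar> * \<bar>y j\<bar>) * (c * eps + K0 * eps\<^sup>2))"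

definition shat :: "(real \<Rightarrow> real \<Rightarrow> real) \<Rightarrow> (real \<Rightarrow> real \<Rightarrow> real)
     \<Rightarrow> ((nat \<Rightarrow> real) \<Rightarrow> nat \<Rightarrow> (nat \<Rightarrow> real) \<Rightarrow> real)
     \<Rightarrow> (nat \<Rightarrow> real) \<Rightarrow> nat \<Rightarrow> nat \<Rightarrow> (nat \<Rightarrow> real) \<Rightarrow> (nat \<Rightarrow> real) \<Rightarrow> nat \<Rightarrow> real" where
  "shat fmul fadd fdot p nh no h x q =
     (let n = no + nh - 1; m = n - 1;
          u = (\<lambda>i. fdot (tcG p m i) nh h);
          v = (\<lambda>i. fdot (tcBT p m i) m x);
          w = (\<lambda>i. fmul (u i) (v i))
      in if q < no then fdot (tcAT p q) m w
         else fadd (fdot (tcAT p no) m w) (fmul (h nh) (fdot (tcBTm p m (m + 1)) n x)))"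

definition magA :: "(nat \<Rightarrow> real) \<Rightarrow> nat \<Rightarrow> nat \<Rightarrow> (nat \<Rightarrow> real) \<Rightarrow> (nat \<Rightarrow> real) \<Rightarrow> nat \<Rightarrow> real" where
  "magA p nh no h x q =
     (let m = no + nh - 2 in
      \<Sum>j=1..m. \<bar>tcAT p q j\<bar> *
        ((\<Sum>k=1..nh. \<bar>tcG p m j k\<bar> * \<bar>h k\<bar>) * (\<Sum>k=1..m. \<bar>tcBT p m j k\<bar> * \<bar>x k\<bar>)))"

definition magB :: "(nat \<Rightarrow> real) \<Rightarrow> nat \<Rightarrow> nat \<Rightarrow> (nat \<Rightarrow> real) \<Rightarrow> (nat \<Rightarrow> real) \<Rightarrow> real" where
  "magB p nh no h x =
     (let n = no + nh - 1; m = n - 1 in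
      \<bar>h nh\<bar> * (\<Sum>k=1..n. \<bar>tcBTm p m n k\<bar> * \<bar>x k\<bar>))"

end

theory Submission
  imports Defs
begin


lemma prod_err:
  fixes u U v V d eps SG SB gam bet K0 :: real
  assumes e0: "0 < eps" and e1: "eps \<le> 1"
    and UG: "\<bar>U\<bar> \<le> SG" and VB: "\<bar>V\<bar> \<le> SB"
    and uU: "\<bar>u - U\<bar> \<le> SG*(gam*eps + K0*eps\<^sup>2)"
    and vV: "\<bar>v - V\<bar> \<le> SB*(bet*eps + K0*eps\<^sup>2)"
    and d: "\<bar>d\<bar> \<le> eps"
  shows "\<bar>u*v*(1+d) - U*V\<bar> \<le> SG*SB*(gam+bet+1)*eps
     + SG*SB*(2*\<bar>K0\<bar> + 2*((\<bar>gam\<bar>+\<bar>K0\<bar>)*(\<bar>bet\<bar>+\<bar>K0\<bar>)) + (\<bar>gam\<bar>+\<bar>K0\<bar>) + (\<bar>bet\<bar>+\<bar>K0\<bar>))*eps\<^sup>2"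
proof -
  define LG where "LG = \<bar>gam\<bar>+\<bar>K0\<bar>"
  define LB where "LB = \<bar>bet\<bar>+\<bar>K0\<bar>"
  define eG where "eG = \<bar>u - U\<bar>"
  define eB where "eB = \<bar>v - V\<bar>"
  have SG0: "SG \<ge> 0" using UG by linarith
  have SB0: "SB \<ge> 0" using VB by linarith
  have LG0: "LG \<ge> 0" and LB0: "LB \<ge> 0" unfolding LG_def LB_def by auto
  have e2: "eps\<^sup>2 \<le> eps" using e0 e1 by (simp add: power2_eq_square mult_left_le)
  have cG: "gam*eps + K0*eps\<^sup>2 \<le> LG*eps"
  proof -
    have "gam*eps \<le> \<bar>gam\<bar>*eps" using e0 by (simp add: mult_right_mono)
    moreover have "K0*eps\<^sup>2 \<le> \<bar>K0\<bar>*eps\<^sup>2" by (simp add: mult_right_mono)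
    moreover have "\<bar>K0\<bar>*eps\<^sup>2 \<le> \<bar>K0\<bar>*eps" using e2 by (simp add: mult_left_mono)
    ultimately show ?thesis unfolding LG_def by (simp add: algebra_simps)
  qed
  have cB: "bet*eps + K0*eps\<^sup>2 \<le> LB*eps"
  proof -
    have "bet*eps \<le> \<bar>bet\<bar>*eps" using e0 by (simp add: mult_right_mono)
    moreover have "K0*eps\<^sup>2 \<le> \<bar>K0\<bar>*eps\<^sup>2" by (simp add: mult_right_mono)
    moreover have "\<bar>K0\<bar>*eps\<^sup>2 \<le> \<bar>K0\<bar>*eps" using e2 by (simp add: mult_left_mono)
    ultimately show ?thesis unfolding LB_def by (simp add: algebra_simps)
  qed
  have eGl: "eG \<le> SG*LG*eps" using uU mult_left_mono[OF cG SG0] unfolding eG_def by (simp add: mult.assoc)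
  have eBl: "eB \<le> SB*LB*eps" using vV mult_left_mono[OF cB SB0] unfolding eB_def by (simp add: mult.assoc)
  have eG0: "eG \<ge> 0" and eB0: "eB \<ge> 0" unfolding eG_def eB_def by auto
  have id: "u*v*(1+d) - U*V = (u-U)*v + U*(v-V) + u*v*d" by (simp add: algebra_simps)
  have "\<bar>u*v*(1+d) - U*V\<bar> \<le> eG*\<bar>v\<bar> + \<bar>U\<bar>*eB + \<bar>u\<bar>*\<bar>v\<bar>*\<bar>d\<bar>"
    unfolding id eG_def eB_def
  proof -
    have "\<bar>(u-U)*v + U*(v-V) + u*v*d\<bar> \<le> \<bar>(u-U)*v\<bar> + \<bar>U*(v-V)\<bar> + \<bar>u*v*d\<bar>" by (rule order.trans[OF abs_triangle_ineq add_right_mono[OF abs_triangle_ineq]])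
    thus "\<bar>(u-U)*v + U*(v-V) + u*v*d\<bar> \<le> \<bar>u - U\<bar>*\<bar>v\<bar> + \<bar>U\<bar>*\<bar>v - V\<bar> + \<bar>u\<bar>*\<bar>v\<bar>*\<bar>d\<bar>" by (simp add: abs_mult)
  qed
  moreover have vb: "\<bar>v\<bar> \<le> SB + eB" unfolding eB_def using VB by linarith
  moreover have ub: "\<bar>u\<bar> \<le> SG + eG" unfolding eG_def using UG by linarith
  moreover have t1: "eG*\<bar>v\<bar> \<le> eG*SB + eG*eB" using mult_left_mono[OF vb eG0] by (simp add: algebra_simps)
  moreover have "eG*SB \<le> SG*(gam*eps + K0*eps\<^sup>2)*SB" using mult_right_mono[OF uU SB0] unfolding eG_def .
  moreover have "eG*eB \<le> (SG*LG*eps)*(SB*LB*eps)" using mult_mono[OF eGl eBl] eB0 SG0 LG0 e0 by simp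
  moreover have "\<bar>U\<bar>*eB \<le> SG*(SB*(bet*eps + K0*eps\<^sup>2))"
    using mult_mono[OF UG vV] SG0 unfolding eB_def by simp
  moreover have "\<bar>u\<bar>*\<bar>v\<bar>*\<bar>d\<bar> \<le> (SG+SG*LG*eps)*(SB+SB*LB*eps)*eps"
  proof -
    have a: "\<bar>u\<bar> \<le> SG+SG*LG*eps" using ub eGl by linarith
    have b: "\<bar>v\<bar> \<le> SB+SB*LB*eps" using vb eBl by linarith
    have uv: "\<bar>u\<bar>*\<bar>v\<bar> \<le> (SG+SG*LG*eps)*(SB+SB*LB*eps)" using mult_mono[OF a b] SG0 LG0 e0 by simp
    have nn: "0 \<le> (SG+SG*LG*eps)*(SB+SB*LB*eps)" using SG0 SB0 LG0 LB0 e0 by simp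
    show ?thesis using mult_mono[OF uv d nn] by simp
  qed
  moreover have "SG*(gam*eps + K0*eps\<^sup>2)*SB + (SG*LG*eps)*(SB*LB*eps) + SG*(SB*(bet*eps + K0*eps\<^sup>2))
      + (SG+SG*LG*eps)*(SB+SB*LB*eps)*eps
     \<le> SG*SB*(gam+bet+1)*eps + SG*SB*(2*\<bar>K0\<bar> + 2*(LG*LB) + LG + LB)*eps\<^sup>2"
  proof -
    have i: "(gam*eps + K0*eps\<^sup>2) + LG*LB*eps\<^sup>2 + (bet*eps + K0*eps\<^sup>2) + (1+LG*eps)*(1+LB*eps)*eps
       \<le> (gam+bet+1)*eps + (2*\<bar>K0\<bar> + 2*(LG*LB) + LG + LB)*eps\<^sup>2"
    proof -
      have "K0*eps\<^sup>2 \<le> \<bar>K0\<bar>*eps\<^sup>2" by (simp add: mult_right_mono)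
      moreover have "LG*LB*eps^3 \<le> LG*LB*eps\<^sup>2"
      proof -
        have "eps^3 \<le> eps^2" using e0 e1 by (simp add: power_decreasing)
        thus ?thesis using LG0 LB0 by (simp add: mult_left_mono)
      qed
      ultimately show ?thesis by (simp add: algebra_simps power2_eq_square power3_eq_cube)
    qed
    have "SG*SB*((gam*eps + K0*eps\<^sup>2) + LG*LB*eps\<^sup>2 + (bet*eps + K0*eps\<^sup>2) + (1+LG*eps)*(1+LB*eps)*eps)
       \<le> SG*SB*((gam+bet+1)*eps + (2*\<bar>K0\<bar> + 2*(LG*LB) + LG + LB)*eps\<^sup>2)"
      using mult_left_mono[OF i] SG0 SB0 by simp
    thus ?thesis by (simp add: algebra_simps power2_eq_square)
  qed
  ultimately show ?thesis unfolding LG_def LB_def by linarith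
qed

lemma dot_stage:
  fixes a w W P :: "nat \<Rightarrow> real" and f eps X Lw alp K0 :: real
  assumes e0: "0 < eps" and e1: "eps \<le> 1" and Lw0: "Lw \<ge> 0"
    and werr: "\<forall>j\<in>{1..m}. \<bar>w j - W j\<bar> \<le> P j * X * eps + P j * Lw * eps\<^sup>2"
    and Wle: "\<forall>j\<in>{1..m}. \<bar>W j\<bar> \<le> P j"
    and derr: "\<bar>(\<Sum>j=1..m. a j * w j) - f\<bar> \<le> (\<Sum>j=1..m. \<bar>a j\<bar> * \<bar>w j\<bar>) * (alp*eps + K0*eps\<^sup>2)"
    and cA: "alp*eps + K0*eps\<^sup>2 \<ge> 0"
  shows "\<bar>f - (\<Sum>j=1..m. a j * W j)\<bar> \<le> (\<Sum>j=1..m. \<bar>a j\<bar> * P j) * (X + alp) * eps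
     + (\<Sum>j=1..m. \<bar>a j\<bar> * P j) * (Lw + \<bar>K0\<bar> + (\<bar>X\<bar>+Lw)*(\<bar>alp\<bar>+\<bar>K0\<bar>)) * eps\<^sup>2"
proof -
  define S where "S = (\<Sum>j=1..m. \<bar>a j\<bar> * P j)"
  define L' where "L' = \<bar>X\<bar>+Lw"
  define c where "c = alp*eps + K0*eps\<^sup>2"
  have P0: "\<forall>j\<in>{1..m}. P j \<ge> 0" using Wle by (meson abs_ge_zero order.trans)
  have S0: "S \<ge> 0" unfolding S_def using P0 by (intro sum_nonneg) simp
  have e2: "eps\<^sup>2 \<le> eps" using e0 e1 by (simp add: power2_eq_square mult_left_le)
  have "\<bar>(\<Sum>j=1..m. a j * w j) - (\<Sum>j=1..m. a j * W j)\<bar> = \<bar>\<Sum>j=1..m. a j * (w j - W j)\<bar>"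
    by (simp add: sum_subtractf algebra_simps)
  also have "\<dots> \<le> (\<Sum>j=1..m. \<bar>a j * (w j - W j)\<bar>)" by (rule sum_abs)
  also have "\<dots> \<le> (\<Sum>j=1..m. \<bar>a j\<bar> * (P j * X * eps + P j * Lw * eps\<^sup>2))"
    using werr by (auto intro!: sum_mono simp: abs_mult mult_left_mono)
  also have "\<dots> = (\<Sum>j=1..m. (\<bar>a j\<bar> * P j) * (X * eps) + (\<bar>a j\<bar> * P j) * (Lw * eps\<^sup>2))"
    by (simp add: algebra_simps)
  also have "\<dots> = S * X * eps + S * Lw * eps\<^sup>2"
    unfolding S_def sum.distrib sum_distrib_right[symmetric] by simp
  finally have t1: "\<bar>(\<Sum>j=1..m. a j * w j) - (\<Sum>j=1..m. a j * W j)\<bar> \<le> S * X * eps + S * Lw * eps\<^sup>2" .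
  have wb: "\<forall>j\<in>{1..m}. \<bar>w j\<bar> \<le> P j * (1 + L' * eps)"
  proof
    fix j assume j: "j \<in> {1..m}"
    have "\<bar>w j\<bar> \<le> \<bar>W j\<bar> + \<bar>w j - W j\<bar>" by linarith
    moreover have "P j * X * eps \<le> P j * \<bar>X\<bar> * eps" using P0 j e0
      by (simp add: mult_left_mono mult_right_mono)
    moreover have "P j * Lw * eps\<^sup>2 \<le> P j * Lw * eps" using P0 j Lw0 e2
      by (simp add: mult_left_mono)
    moreover have "\<bar>w j - W j\<bar> \<le> P j * X * eps + P j * Lw * eps\<^sup>2" using werr j by blast
    moreover have "\<bar>W j\<bar> \<le> P j" using Wle j by blast
    moreover have "P j * (1 + L' * eps) = P j + P j * \<bar>X\<bar> * eps + P j * Lw * eps" unfolding L'_def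
      by (simp add: algebra_simps)
    ultimately show "\<bar>w j\<bar> \<le> P j * (1 + L' * eps)" by linarith
  qed
  have "(\<Sum>j=1..m. \<bar>a j\<bar> * \<bar>w j\<bar>) \<le> (\<Sum>j=1..m. \<bar>a j\<bar> * (P j * (1 + L' * eps)))"
    using wb by (auto intro!: sum_mono mult_left_mono)
  also have "\<dots> = (\<Sum>j=1..m. (\<bar>a j\<bar> * P j) * (1 + L' * eps))" by (simp add: algebra_simps)
  also have "\<dots> = S * (1 + L' * eps)" unfolding S_def sum_distrib_right[symmetric] by simp
  finally have sw: "(\<Sum>j=1..m. \<bar>a j\<bar> * \<bar>w j\<bar>) \<le> S * (1 + L' * eps)" .
  have t2: "\<bar>(\<Sum>j=1..m. a j * w j) - f\<bar> \<le> S * (1 + L' * eps) * c"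
    using derr mult_right_mono[OF sw cA] unfolding c_def by linarith
  have c1: "c \<le> alp*eps + \<bar>K0\<bar>*eps\<^sup>2" unfolding c_def by (simp add: mult_right_mono)
  have c2: "c \<le> (\<bar>alp\<bar>+\<bar>K0\<bar>)*eps"
  proof -
    have "alp*eps \<le> \<bar>alp\<bar>*eps" using e0 by (simp add: mult_right_mono)
    moreover have "\<bar>K0\<bar>*eps\<^sup>2 \<le> \<bar>K0\<bar>*eps" using e2 by (simp add: mult_left_mono)
    ultimately show ?thesis using c1 by (simp add: algebra_simps)
  qed
  have L'0: "L' \<ge> 0" unfolding L'_def using Lw0 by simp
  have "S * (1 + L' * eps) * c = S*c + (S*L'*eps)*c" by (simp add: algebra_simps)
  also have "\<dots> \<le> S*(alp*eps + \<bar>K0\<bar>*eps\<^sup>2) + (S*L'*eps)*((\<bar>alp\<bar>+\<bar>K0\<bar>)*eps)"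
    using mult_left_mono[OF c1 S0] mult_left_mono[OF c2, of "S*L'*eps"] S0 L'0 e0 by simp
  finally have t3: "S * (1 + L' * eps) * c \<le> S*alp*eps + S*(\<bar>K0\<bar> + L'*(\<bar>alp\<bar>+\<bar>K0\<bar>))*eps\<^sup>2"
    by (simp add: algebra_simps power2_eq_square)
  have "\<bar>f - (\<Sum>j=1..m. a j * W j)\<bar> \<le> S * X * eps + S * Lw * eps\<^sup>2 + (S*alp*eps + S*(\<bar>K0\<bar> + L'*(\<bar>alp\<bar>+\<bar>K0\<bar>))*eps\<^sup>2)"
    using t1 t2 t3 by linarith
  thus ?thesis unfolding S_def[symmetric] L'_def[symmetric] by (simp add: algebra_simps)
qed

lemma final_stage:
  fixes P SA fv Sb hh d3 d4 eps MAq CA X' SBn betn K0 :: real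
  assumes e0: "0 < eps" and e1: "eps \<le> 1" and MA0: "MAq \<ge> 0" and CA0: "CA \<ge> 0"
    and Perr: "\<bar>P - SA\<bar> \<le> MAq*X'*eps + MAq*CA*eps\<^sup>2"
    and SAle: "\<bar>SA\<bar> \<le> MAq"
    and ferr: "\<bar>fv - Sb\<bar> \<le> SBn*(betn*eps + K0*eps\<^sup>2)"
    and Sble: "\<bar>Sb\<bar> \<le> SBn"
    and d4: "\<bar>d4\<bar> \<le> eps" and d3: "\<bar>d3\<bar> \<le> eps"
  shows "\<bar>(P + hh*fv*(1+d4))*(1+d3) - (SA + hh*Sb)\<bar>
     \<le> (MAq + \<bar>hh\<bar>*SBn) * (max X' (betn+1) + 1)*eps
       + (MAq + \<bar>hh\<bar>*SBn)*(2*CA + \<bar>X'\<bar> + 2*\<bar>K0\<bar> + 2*(\<bar>betn\<bar>+\<bar>K0\<bar>) + \<bar>betn\<bar> + 1)*eps\<^sup>2"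
proof -
  define MB where "MB = \<bar>hh\<bar>*SBn"
  define LN where "LN = \<bar>betn\<bar>+\<bar>K0\<bar>"
  define eF where "eF = \<bar>fv - Sb\<bar>"
  define Q where "Q = hh*fv*(1+d4)"
  define M where "M = max X' (betn+1)"
  have SB0: "SBn \<ge> 0" using Sble by linarith
  have MB0: "MB \<ge> 0" unfolding MB_def using SB0 by simp
  have LN0: "LN \<ge> 0" unfolding LN_def by simp
  have eF0: "eF \<ge> 0" unfolding eF_def by simp
  have e2: "eps\<^sup>2 \<le> eps" using e0 e1 by (simp add: power2_eq_square mult_left_le)
  have cN: "betn*eps + K0*eps\<^sup>2 \<le> LN*eps"
  proof -
    have "betn*eps \<le> \<bar>betn\<bar>*eps" using e0 by (simp add: mult_right_mono)
    moreover have "K0*eps\<^sup>2 \<le> \<bar>K0\<bar>*eps\<^sup>2" by (simp add: mult_right_mono)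
    moreover have "\<bar>K0\<bar>*eps\<^sup>2 \<le> \<bar>K0\<bar>*eps" using e2 by (simp add: mult_left_mono)
    ultimately show ?thesis unfolding LN_def by (simp add: algebra_simps)
  qed
  have eFl: "eF \<le> SBn*LN*eps" using ferr mult_left_mono[OF cN SB0] unfolding eF_def by (simp add: mult.assoc)
  have idQ: "Q - hh*Sb = hh*(fv - Sb)*(1+d4) + hh*Sb*d4" unfolding Q_def by (simp add: algebra_simps)
  have "\<bar>Q - hh*Sb\<bar> \<le> \<bar>hh\<bar>*eF*\<bar>1+d4\<bar> + \<bar>hh\<bar>*\<bar>Sb\<bar>*\<bar>d4\<bar>"
    unfolding idQ eF_def by (metis abs_mult abs_triangle_ineq)
  moreover have "\<bar>hh\<bar>*eF*\<bar>1+d4\<bar> \<le> \<bar>hh\<bar>*eF*(1+eps)"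
    using d4 eF0 by (intro mult_left_mono) auto
  moreover have "\<bar>hh\<bar>*\<bar>Sb\<bar>*\<bar>d4\<bar> \<le> \<bar>hh\<bar>*SBn*eps"
    using d4 Sble SB0 by (simp add: mult_mono mult_left_mono)
  moreover have "\<bar>hh\<bar>*eF \<le> MB*(betn*eps + K0*eps\<^sup>2)" unfolding MB_def eF_def
    using mult_left_mono[OF ferr, of "\<bar>hh\<bar>"] by (simp add: mult.assoc)
  moreover have "\<bar>hh\<bar>*eF*eps \<le> MB*LN*eps*eps" unfolding MB_def
    using mult_right_mono[OF mult_left_mono[OF eFl, of "\<bar>hh\<bar>"], of eps] e0 by (simp add: mult.assoc)
  moreover have "MB*K0*eps\<^sup>2 \<le> MB*\<bar>K0\<bar>*eps\<^sup>2" using MB0 by (simp add: mult_left_mono mult_right_mono)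
  ultimately have qerr: "\<bar>Q - hh*Sb\<bar> \<le> MB*(betn+1)*eps + MB*(\<bar>K0\<bar>+LN)*eps\<^sup>2"
    unfolding MB_def by (simp add: algebra_simps power2_eq_square)
  have Pb: "\<bar>P\<bar> \<le> MAq + MAq*(\<bar>X'\<bar>+CA)*eps"
  proof -
    have "MAq*X'*eps \<le> MAq*\<bar>X'\<bar>*eps" using MA0 e0 by (simp add: mult_left_mono mult_right_mono)
    moreover have "MAq*CA*eps\<^sup>2 \<le> MAq*CA*eps" using MA0 CA0 e2 by (simp add: mult_left_mono)
    ultimately show ?thesis using Perr SAle by (simp add: algebra_simps)
  qed
  have Qb: "\<bar>Q\<bar> \<le> MB + MB*(\<bar>betn\<bar>+1+\<bar>K0\<bar>+LN)*eps"
  proof -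
    have "\<bar>hh*Sb\<bar> \<le> MB" unfolding MB_def using Sble by (simp add: abs_mult mult_left_mono)
    moreover have "MB*(betn+1)*eps \<le> MB*(\<bar>betn\<bar>+1)*eps" using MB0 e0 by (simp add: mult_left_mono mult_right_mono)
    moreover have "MB*(\<bar>K0\<bar>+LN)*eps\<^sup>2 \<le> MB*(\<bar>K0\<bar>+LN)*eps" using MB0 LN0 e2 by (simp add: mult_left_mono)
    ultimately show ?thesis using qerr by (simp add: algebra_simps)
  qed
  have idR: "(P + Q)*(1+d3) - (SA + hh*Sb) = (P - SA) + (Q - hh*Sb) + (P+Q)*d3" by (simp add: algebra_simps)
  have "\<bar>(P + Q)*(1+d3) - (SA + hh*Sb)\<bar> \<le> \<bar>P - SA\<bar> + \<bar>Q - hh*Sb\<bar> + (\<bar>P\<bar>+\<bar>Q\<bar>)*eps"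
  proof -
    have "\<bar>(P+Q)*d3\<bar> \<le> (\<bar>P\<bar>+\<bar>Q\<bar>)*eps" unfolding abs_mult
      using d3 by (intro mult_mono) auto
    thus ?thesis unfolding idR by linarith
  qed
  moreover have "(\<bar>P\<bar>+\<bar>Q\<bar>)*eps \<le> (MAq + MAq*(\<bar>X'\<bar>+CA)*eps + (MB + MB*(\<bar>betn\<bar>+1+\<bar>K0\<bar>+LN)*eps))*eps"
    using Pb Qb e0 by (intro mult_right_mono) auto
  moreover have "MAq*X' \<le> MAq*M" unfolding M_def using MA0 by (simp add: mult_left_mono)
  moreover have "MB*(betn+1) \<le> MB*M" unfolding M_def using MB0 by (simp add: mult_left_mono)
  moreover have "MAq*X'*eps \<le> MAq*M*eps" using calculation(3) e0 by (simp add: mult_right_mono)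
  moreover have "MB*(betn+1)*eps \<le> MB*M*eps" using calculation(4) e0 by (simp add: mult_right_mono)
  ultimately have "\<bar>(P + Q)*(1+d3) - (SA + hh*Sb)\<bar> \<le> MAq*M*eps + MAq*CA*eps\<^sup>2 + MB*M*eps + MB*(\<bar>K0\<bar>+LN)*eps\<^sup>2
      + (MAq + MAq*(\<bar>X'\<bar>+CA)*eps + (MB + MB*(\<bar>betn\<bar>+1+\<bar>K0\<bar>+LN)*eps))*eps"
    using Perr qerr by linarith
  also have "\<dots> = (MAq + MB) * (M + 1)*eps
       + (MAq*(2*CA + \<bar>X'\<bar>) + MB*(2*\<bar>K0\<bar> + 2*LN + \<bar>betn\<bar> + 1))*eps\<^sup>2"
    by (simp add: algebra_simps power2_eq_square)
  also have "\<dots> \<le> (MAq + MB) * (M + 1)*eps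
       + (MAq + MB)*(2*CA + \<bar>X'\<bar> + 2*\<bar>K0\<bar> + 2*LN + \<bar>betn\<bar> + 1)*eps\<^sup>2"
  proof -
    have "MAq*(2*CA + \<bar>X'\<bar>) \<le> MAq*(2*CA + \<bar>X'\<bar> + 2*\<bar>K0\<bar> + 2*LN + \<bar>betn\<bar> + 1)"
      using MA0 LN0 by (intro mult_left_mono) auto
    moreover have "MB*(2*\<bar>K0\<bar> + 2*LN + \<bar>betn\<bar> + 1) \<le> MB*(2*CA + \<bar>X'\<bar> + 2*\<bar>K0\<bar> + 2*LN + \<bar>betn\<bar> + 1)"
      using MB0 CA0 by (intro mult_left_mono) auto
    ultimately have "MAq*(2*CA + \<bar>X'\<bar>) + MB*(2*\<bar>K0\<bar> + 2*LN + \<bar>betn\<bar> + 1)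
       \<le> (MAq + MB)*(2*CA + \<bar>X'\<bar> + 2*\<bar>K0\<bar> + 2*LN + \<bar>betn\<bar> + 1)" by (simp add: algebra_simps)
    thus ?thesis by (simp add: mult_right_mono)
  qed
  finally show ?thesis unfolding Q_def MB_def M_def LN_def .
qed

lemma exact_decomp:
  assumes "1 \<le> nh" "2 \<le> no" "m = no + nh - 2"
  shows "exact_s p nh no h x q = (\<Sum>j=1..m. tcAT p q j * ((\<Sum>k=1..nh. tcG p m j k * h k) * (\<Sum>k=1..m. tcBT p m j k * x k)))
     + (if q = no then h nh * (\<Sum>k=1..m+1. tcBTm p m (m+1) k * x k) else 0)"
proof -
  have n1: "no + nh - 1 = Suc m" "no + nh - 1 - 1 = m" using assms by auto
  have inner: "tcATm p m no q j * ((\<Sum>k=1..nh. tcGm p m nh j k * h k) * (\<Sum>k=1..Suc m. tcBTm p m j k * x k))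
     = tcAT p q j * ((\<Sum>k=1..nh. tcG p m j k * h k) * (\<Sum>k=1..m. tcBT p m j k * x k))"
    if j: "j \<in> {1..m}" for j
  proof -
    have "(\<Sum>k=1..Suc m. tcBTm p m j k * x k) = (\<Sum>k=1..m. tcBTm p m j k * x k)"
      using j by (simp add: tcBTm_def)
    also have "\<dots> = (\<Sum>k=1..m. tcBT p m j k * x k)"
      using j by (intro sum.cong) (auto simp: tcBTm_def)
    finally show ?thesis using j by (simp add: tcATm_def tcGm_def)
  qed
  have last: "(\<Sum>k=1..nh. tcGm p m nh (Suc m) k * h k) = h nh"
  proof -
    have "(\<Sum>k=1..nh. tcGm p m nh (Suc m) k * h k) = (\<Sum>k=1..nh. if k = nh then h k else 0)"
      by (intro sum.cong) (auto simp: tcGm_def)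
    thus ?thesis using assms(1) by simp
  qed
  have "exact_s p nh no h x q = (\<Sum>j=1..Suc m. tcATm p m no q j * ((\<Sum>k=1..nh. tcGm p m nh j k * h k) * (\<Sum>k=1..Suc m. tcBTm p m j k * x k)))"
    unfolding exact_s_def Let_def n1 by simp
  also have "\<dots> = (\<Sum>j=1..m. tcATm p m no q j * ((\<Sum>k=1..nh. tcGm p m nh j k * h k) * (\<Sum>k=1..Suc m. tcBTm p m j k * x k)))
     + tcATm p m no q (Suc m) * ((\<Sum>k=1..nh. tcGm p m nh (Suc m) k * h k) * (\<Sum>k=1..Suc m. tcBTm p m (Suc m) k * x k))"
    by simp
  also have "(\<Sum>j=1..m. tcATm p m no q j * ((\<Sum>k=1..nh. tcGm p m nh j k * h k) * (\<Sum>k=1..Suc m. tcBTm p m j k * x k)))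
     = (\<Sum>j=1..m. tcAT p q j * ((\<Sum>k=1..nh. tcG p m j k * h k) * (\<Sum>k=1..m. tcBT p m j k * x k)))"
    by (rule sum.cong[OF refl inner])
  finally show ?thesis unfolding last by (simp add: tcATm_def)
qed

lemma shat_decomp:
  assumes "1 \<le> nh" "2 \<le> no" "m = no + nh - 2"
  shows "shat fmul fadd fdot p nh no h x q =
    (let w = (\<lambda>i. fmul (fdot (tcG p m i) nh h) (fdot (tcBT p m i) m x)) in
     if q < no then fdot (tcAT p q) m w
     else fadd (fdot (tcAT p no) m w) (fmul (h nh) (fdot (tcBTm p m (m + 1)) (m+1) x)))"
proof -
  have n1: "no + nh - 1 = m + 1" "no + nh - 1 - 1 = m" using assms by auto
  show ?thesis unfolding shat_def Let_def n1 by simp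
qed

lemma magA_eq:
  assumes "m = no + nh - 2"
  shows "magA p nh no h x q = (\<Sum>j=1..m. \<bar>tcAT p q j\<bar> *
        ((\<Sum>k=1..nh. \<bar>tcG p m j k\<bar> * \<bar>h k\<bar>) * (\<Sum>k=1..m. \<bar>tcBT p m j k\<bar> * \<bar>x k\<bar>)))"
  using assms by (simp add: magA_def Let_def)

lemma magB_eq:
  assumes "1 \<le> nh" "2 \<le> no" "m = no + nh - 2"
  shows "magB p nh no h x = \<bar>h nh\<bar> * (\<Sum>k=1..m+1. \<bar>tcBTm p m (m+1) k\<bar> * \<bar>x k\<bar>)"
proof -
  have n1: "no + nh - 1 = m + 1" "no + nh - 1 - 1 = m" using assms by auto
  show ?thesis unfolding magB_def Let_def n1 by simp
qed

definition Lwc :: "real \<Rightarrow> real \<Rightarrow> real \<Rightarrow> real" where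
  "Lwc gam bet K0 = 2*\<bar>K0\<bar> + 2*((\<bar>gam\<bar>+\<bar>K0\<bar>)*(\<bar>bet\<bar>+\<bar>K0\<bar>)) + (\<bar>gam\<bar>+\<bar>K0\<bar>) + (\<bar>bet\<bar>+\<bar>K0\<bar>)"
definition CAc :: "real \<Rightarrow> real \<Rightarrow> real \<Rightarrow> real \<Rightarrow> real" where
  "CAc gam bet alp K0 = Lwc gam bet K0 + \<bar>K0\<bar> + (\<bar>gam+bet+1\<bar> + Lwc gam bet K0)*(\<bar>alp\<bar>+\<bar>K0\<bar>)"
definition Cc :: "real \<Rightarrow> real \<Rightarrow> real \<Rightarrow> real \<Rightarrow> real \<Rightarrow> real" where
  "Cc gam bet alp betn K0 = 2*CAc gam bet alp K0 + \<bar>gam+bet+1+alp\<bar> + 2*\<bar>K0\<bar> + 2*(\<bar>betn\<bar>+\<bar>K0\<bar>) + \<bar>betn\<bar> + 1"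
definition MAc :: "(nat \<Rightarrow> real) \<Rightarrow> nat \<Rightarrow> nat \<Rightarrow> (nat \<Rightarrow> real) \<Rightarrow> (nat \<Rightarrow> real) \<Rightarrow> real" where
  "MAc p nh no h x = (\<Sum>q=1..no. magA p nh no h x q) + magB p nh no h x"

lemma core:
  fixes p :: "nat \<Rightarrow> real" and nh no :: nat
    and h x :: "nat \<Rightarrow> real"
    and gam bet alp betn K0 :: real
  assumes nh1: "1 \<le> nh" and no2: "2 \<le> no"
    and fp: "fp_model F eps fmul fadd" and e1: "eps \<le> 1"
    and hF: "\<forall>j\<in>{1..nh}. h j \<in> F" and xF0: "\<forall>j\<in>{1..no + nh - 1}. x j \<in> F"
    and dG0: "\<forall>i\<in>{1..no + nh - 2}. dot_err F eps fdot (tcG p (no + nh - 2) i) nh gam K0"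
    and dB0: "\<forall>i\<in>{1..no + nh - 2}. dot_err F eps fdot (tcBT p (no + nh - 2) i) (no + nh - 2) bet K0"
    and dA0: "\<forall>i\<in>{1..no}. dot_err F eps fdot (tcAT p i) (no + nh - 2) alp K0"
    and dN0: "dot_err F eps fdot (tcBTm p (no + nh - 2) (no + nh - 1)) (no + nh - 1) betn K0"
  shows "(\<forall>q\<in>{1..no - 1}.
          \<bar>shat fmul fadd fdot p nh no h x q - exact_s p nh no h x q\<bar>
            \<le> magA p nh no h x q * (gam + bet + alp + 1) * eps + (MAc p nh no h x * Cc gam bet alp betn K0) * eps\<^sup>2) \<and>
       \<bar>shat fmul fadd fdot p nh no h x no - exact_s p nh no h x no\<bar>
            \<le> (magA p nh no h x no + magB p nh no h x)
               * (max (gam + bet + alp + 1) (betn + 1) + 1) * eps + (MAc p nh no h x * Cc gam bet alp betn K0) * eps\<^sup>2"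
proof -
  define m where "m = no + nh - 2"
  have m1: "1 \<le> m" and nm: "no + nh - 1 = m + 1" and m2: "no + nh - 2 = m" using nh1 no2 by (auto simp: m_def)
  have xF: "\<forall>j\<in>{1..m+1}. x j \<in> F" using xF0 unfolding nm .
  have xFm: "\<forall>j\<in>{1..m}. x j \<in> F" using xF by auto
  have dG: "\<forall>i\<in>{1..m}. dot_err F eps fdot (tcG p m i) nh gam K0" using dG0 unfolding m2 .
  have dB: "\<forall>i\<in>{1..m}. dot_err F eps fdot (tcBT p m i) m bet K0" using dB0 unfolding m2 .
  have dA: "\<forall>i\<in>{1..no}. dot_err F eps fdot (tcAT p i) m alp K0" using dA0 unfolding m2 .
  have dN: "dot_err F eps fdot (tcBTm p m (m+1)) (m+1) betn K0" using dN0 unfolding m2 nm .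
  have e0: "0 < eps" using fp unfolding fp_model_def by auto
  have fmulF: "\<And>y z. y \<in> F \<Longrightarrow> z \<in> F \<Longrightarrow> fmul y z \<in> F \<and> (\<exists>d. \<bar>d\<bar> \<le> eps \<and> fmul y z = (y * z) * (1 + d))"
    using fp unfolding fp_model_def by auto
  have faddF: "\<And>y z. y \<in> F \<Longrightarrow> z \<in> F \<Longrightarrow> fadd y z \<in> F \<and> (\<exists>d. \<bar>d\<bar> \<le> eps \<and> fadd y z = (y + z) * (1 + d))"
    using fp unfolding fp_model_def by auto
  define K where "K = MAc p nh no h x * Cc gam bet alp betn K0"
  define magAq where "magAq = magA p nh no h x"
  define magBv where "magBv = magB p nh no h x"
  define U where "U i = (\<Sum>k=1..nh. tcG p m i k * h k)" for i
  define V where "V i = (\<Sum>k=1..m. tcBT p m i k * x k)" for i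
  define SG where "SG i = (\<Sum>k=1..nh. \<bar>tcG p m i k\<bar> * \<bar>h k\<bar>)" for i
  define SB where "SB i = (\<Sum>k=1..m. \<bar>tcBT p m i k\<bar> * \<bar>x k\<bar>)" for i
  define u where "u i = fdot (tcG p m i) nh h" for i
  define v where "v i = fdot (tcBT p m i) m x" for i
  define w where "w i = fmul (u i) (v i)" for i
  define Bn where "Bn k = tcBTm p m (m+1) k" for k
  define Sb where "Sb = (\<Sum>k=1..m+1. Bn k * x k)"
  define SBn where "SBn = (\<Sum>k=1..m+1. \<bar>Bn k\<bar> * \<bar>x k\<bar>)"
  define fv where "fv = fdot Bn (m+1) x"
  have magA_is: "magAq q = (\<Sum>j=1..m. \<bar>tcAT p q j\<bar> * (SG j * SB j))" for q
    unfolding magAq_def SG_def SB_def by (rule magA_eq[OF m_def])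
  have magB_is: "magBv = \<bar>h nh\<bar> * SBn"
    unfolding magBv_def SBn_def Bn_def by (rule magB_eq[OF nh1 no2 m_def])
  have exact_is: "exact_s p nh no h x q = (\<Sum>j=1..m. tcAT p q j * (U j * V j)) + (if q = no then h nh * Sb else 0)" for q
    unfolding U_def V_def Sb_def Bn_def by (rule exact_decomp[OF nh1 no2 m_def])
  have shat_is: "shat fmul fadd fdot p nh no h x q =
     (if q < no then fdot (tcAT p q) m w else fadd (fdot (tcAT p no) m w) (fmul (h nh) fv))" for q
    unfolding shat_decomp[OF nh1 no2 m_def] Let_def w_def u_def v_def fv_def Bn_def by simp
  have SG0: "SG i \<ge> 0" for i unfolding SG_def by (auto intro!: sum_nonneg)
  have SB0: "SB i \<ge> 0" for i unfolding SB_def by (auto intro!: sum_nonneg)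
  have SBn0: "SBn \<ge> 0" unfolding SBn_def by (rule sum_nonneg) simp
  have magA0: "magAq q \<ge> 0" for q unfolding magA_is using SG0 SB0 by (auto intro!: sum_nonneg)
  have magB0: "magBv \<ge> 0" unfolding magB_is using SBn0 by simp
  have MAc_is: "MAc p nh no h x = (\<Sum>q=1..no. magAq q) + magBv" unfolding MAc_def magAq_def magBv_def ..
  have magAle: "magAq q \<le> MAc p nh no h x" if "q \<in> {1..no}" for q
  proof -
    have "magAq q \<le> (\<Sum>q=1..no. magAq q)" using that magA0 by (intro member_le_sum) auto
    thus ?thesis unfolding MAc_is using magB0 by linarith
  qed
  have MA0: "MAc p nh no h x \<ge> 0" using magAle[of 1] no2 by (simp add: magA0 order.trans[OF magA0])
  have Lw0: "Lwc gam bet K0 \<ge> 0" unfolding Lwc_def by simp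
  have CA0: "CAc gam bet alp K0 \<ge> 0" unfolding CAc_def using Lw0 by simp
  have CAC: "CAc gam bet alp K0 \<le> Cc gam bet alp betn K0" unfolding Cc_def using CA0 by simp
  have C0: "Cc gam bet alp betn K0 \<ge> 0" using CA0 CAC by linarith
  have K0le: "K \<ge> 0" unfolding K_def using MA0 C0 by simp
  have uF: "u i \<in> F" and uerr: "\<bar>u i - U i\<bar> \<le> SG i * (gam*eps + K0*eps\<^sup>2)" if "i\<in>{1..m}" for i
  proof -
    have "dot_err F eps fdot (tcG p m i) nh gam K0" using dG that by blast
    hence "fdot (tcG p m i) nh h \<in> F \<and> \<bar>(\<Sum>j=1..nh. tcG p m i j * h j) - fdot (tcG p m i) nh h\<bar>
       \<le> (\<Sum>j=1..nh. \<bar>tcG p m i j\<bar> * \<bar>h j\<bar>) * (gam*eps + K0*eps\<^sup>2)" using hF unfolding dot_err_def by blast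
    thus "u i \<in> F" "\<bar>u i - U i\<bar> \<le> SG i * (gam*eps + K0*eps\<^sup>2)" unfolding u_def U_def SG_def by (auto simp: abs_minus_commute)
  qed
  have vF: "v i \<in> F" and verr: "\<bar>v i - V i\<bar> \<le> SB i * (bet*eps + K0*eps\<^sup>2)" if "i\<in>{1..m}" for i
  proof -
    have "dot_err F eps fdot (tcBT p m i) m bet K0" using dB that by blast
    hence "fdot (tcBT p m i) m x \<in> F \<and> \<bar>(\<Sum>j=1..m. tcBT p m i j * x j) - fdot (tcBT p m i) m x\<bar>
       \<le> (\<Sum>j=1..m. \<bar>tcBT p m i j\<bar> * \<bar>x j\<bar>) * (bet*eps + K0*eps\<^sup>2)" using xFm unfolding dot_err_def by blast
    thus "v i \<in> F" "\<bar>v i - V i\<bar> \<le> SB i * (bet*eps + K0*eps\<^sup>2)" unfolding v_def V_def SB_def by (auto simp: abs_minus_commute)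
  qed
  have wF: "\<forall>j\<in>{1..m}. w j \<in> F" using fmulF uF vF unfolding w_def by blast
  have Ule: "\<bar>U i\<bar> \<le> SG i" for i
  proof -
    have "\<bar>U i\<bar> \<le> (\<Sum>k=1..nh. \<bar>tcG p m i k * h k\<bar>)" unfolding U_def by (rule sum_abs)
    thus ?thesis unfolding SG_def by (simp add: abs_mult)
  qed
  have Vle: "\<bar>V i\<bar> \<le> SB i" for i
  proof -
    have "\<bar>V i\<bar> \<le> (\<Sum>k=1..m. \<bar>tcBT p m i k * x k\<bar>)" unfolding V_def by (rule sum_abs)
    thus ?thesis unfolding SB_def by (simp add: abs_mult)
  qed
  have WP: "\<forall>j\<in>{1..m}. \<bar>U j * V j\<bar> \<le> SG j * SB j"
    using Ule Vle SG0 SB0 by (simp add: abs_mult mult_mono)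
  have werr: "\<forall>j\<in>{1..m}. \<bar>w j - U j * V j\<bar> \<le> SG j * SB j * (gam+bet+1) * eps + SG j * SB j * Lwc gam bet K0 * eps\<^sup>2"
  proof
    fix i assume i: "i \<in> {1..m}"
    obtain d where d: "\<bar>d\<bar> \<le> eps" "w i = u i * v i * (1 + d)" using fmulF[OF uF[OF i] vF[OF i]] unfolding w_def by blast
    show "\<bar>w i - U i * V i\<bar> \<le> SG i * SB i * (gam+bet+1) * eps + SG i * SB i * Lwc gam bet K0 * eps\<^sup>2"
      using prod_err[OF e0 e1 Ule Vle uerr[OF i] verr[OF i] d(1)] unfolding d(2) Lwc_def .
  qed
  have Aerr: "fdot (tcAT p q) m w \<in> F \<and> \<bar>fdot (tcAT p q) m w - (\<Sum>j=1..m. tcAT p q j * (U j * V j))\<bar>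
      \<le> magAq q * (gam + bet + alp + 1) * eps + magAq q * CAc gam bet alp K0 * eps\<^sup>2"
    if q: "q \<in> {1..no}" and cA: "alp*eps + K0*eps\<^sup>2 \<ge> 0" for q
  proof -
    have "dot_err F eps fdot (tcAT p q) m alp K0" using dA q by blast
    hence fA: "fdot (tcAT p q) m w \<in> F" and derr: "\<bar>(\<Sum>j=1..m. tcAT p q j * w j) - fdot (tcAT p q) m w\<bar>
       \<le> (\<Sum>j=1..m. \<bar>tcAT p q j\<bar> * \<bar>w j\<bar>) * (alp*eps + K0*eps\<^sup>2)" using wF unfolding dot_err_def by blast+
    have "\<bar>fdot (tcAT p q) m w - (\<Sum>j=1..m. tcAT p q j * (U j * V j))\<bar> \<le>
       (\<Sum>j=1..m. \<bar>tcAT p q j\<bar> * (SG j * SB j)) * ((gam+bet+1) + alp) * eps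
     + (\<Sum>j=1..m. \<bar>tcAT p q j\<bar> * (SG j * SB j)) * (Lwc gam bet K0 + \<bar>K0\<bar> + (\<bar>gam+bet+1\<bar>+Lwc gam bet K0)*(\<bar>alp\<bar>+\<bar>K0\<bar>)) * eps\<^sup>2"
      by (rule dot_stage[OF e0 e1 Lw0 _ _ derr cA]) (use werr WP in auto)
    moreover have "(gam+bet+1) + alp = gam + bet + alp + 1" by simp
    ultimately show ?thesis using fA unfolding magA_is[symmetric] CAc_def[symmetric] by simp
  qed
  show ?thesis
  proof (cases "alp*eps + K0*eps\<^sup>2 \<ge> 0")
    case True
    have Kb: "magAq q * CAc gam bet alp K0 * eps\<^sup>2 \<le> K * eps\<^sup>2" if "q \<in> {1..no}" for q
      unfolding K_def using mult_mono[OF magAle[OF that] CAC MA0 CA0]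
      by (intro mult_right_mono) auto
    have part1: "\<forall>q\<in>{1..no - 1}. \<bar>shat fmul fadd fdot p nh no h x q - exact_s p nh no h x q\<bar>
            \<le> magAq q * (gam + bet + alp + 1) * eps + K * eps\<^sup>2"
    proof
      fix q assume q: "q \<in> {1..no - 1}"
      hence q': "q \<in> {1..no}" "q < no" "q \<noteq> no" by auto
      show "\<bar>shat fmul fadd fdot p nh no h x q - exact_s p nh no h x q\<bar>
            \<le> magAq q * (gam + bet + alp + 1) * eps + K * eps\<^sup>2"
        using Aerr[OF q'(1) True] Kb[OF q'(1)] unfolding shat_is exact_is using q' by simp
    qed
    have part2: "\<bar>shat fmul fadd fdot p nh no h x no - exact_s p nh no h x no\<bar>
            \<le> (magAq no + magBv) * (max (gam + bet + alp + 1) (betn + 1) + 1) * eps + K * eps\<^sup>2"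
    proof -
      define P where "P = fdot (tcAT p no) m w"
      define SA where "SA = (\<Sum>j=1..m. tcAT p no j * (U j * V j))"
      have qno: "no \<in> {1..no}" using no2 by simp
      have PF: "P \<in> F" and Perr: "\<bar>P - SA\<bar> \<le> magAq no * (gam + bet + alp + 1) * eps + magAq no * CAc gam bet alp K0 * eps\<^sup>2"
        using Aerr[OF qno True] unfolding P_def SA_def by auto
      have SAle: "\<bar>SA\<bar> \<le> magAq no"
      proof -
        have "\<bar>SA\<bar> \<le> (\<Sum>j=1..m. \<bar>tcAT p no j * (U j * V j)\<bar>)" unfolding SA_def by (rule sum_abs)
        also have "\<dots> \<le> (\<Sum>j=1..m. \<bar>tcAT p no j\<bar> * (SG j * SB j))"
          using WP by (auto intro!: sum_mono simp: abs_mult[of "tcAT p no _"] mult_left_mono)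
        finally show ?thesis unfolding magA_is .
      qed
      have "dot_err F eps fdot Bn (m+1) betn K0" using dN unfolding Bn_def by simp
      hence fvF: "fv \<in> F" and ferr: "\<bar>fv - Sb\<bar> \<le> SBn * (betn*eps + K0*eps\<^sup>2)"
        using xF unfolding dot_err_def fv_def Sb_def SBn_def by (auto simp: abs_minus_commute)
      have Sble: "\<bar>Sb\<bar> \<le> SBn"
      proof -
        have "\<bar>Sb\<bar> \<le> (\<Sum>k=1..m+1. \<bar>Bn k * x k\<bar>)" unfolding Sb_def by (rule sum_abs)
        thus ?thesis unfolding SBn_def by (simp add: abs_mult)
      qed
      have hnF: "h nh \<in> F" using hF nh1 by auto
      obtain d4 where d4: "\<bar>d4\<bar> \<le> eps" "fmul (h nh) fv = h nh * fv * (1 + d4)" and QF: "fmul (h nh) fv \<in> F"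
        using fmulF[OF hnF fvF] by blast
      obtain d3 where d3: "\<bar>d3\<bar> \<le> eps" "fadd P (fmul (h nh) fv) = (P + fmul (h nh) fv) * (1 + d3)"
        using faddF[OF PF QF] by blast
      have shat_no: "shat fmul fadd fdot p nh no h x no = (P + h nh * fv * (1 + d4)) * (1 + d3)"
        unfolding shat_is P_def[symmetric] using d3(2) d4(2) by simp
      have exact_no: "exact_s p nh no h x no = SA + h nh * Sb" unfolding exact_is SA_def by simp
      have fs: "\<bar>(P + h nh*fv*(1+d4))*(1+d3) - (SA + h nh*Sb)\<bar>
         \<le> (magAq no + \<bar>h nh\<bar>*SBn) * (max (gam + bet + alp + 1) (betn+1) + 1)*eps
       + (magAq no + \<bar>h nh\<bar>*SBn)*(2*CAc gam bet alp K0 + \<bar>gam + bet + alp + 1\<bar> + 2*\<bar>K0\<bar> + 2*(\<bar>betn\<bar>+\<bar>K0\<bar>) + \<bar>betn\<bar> + 1)*eps\<^sup>2"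
        by (rule final_stage[OF e0 e1 magA0 CA0 Perr SAle ferr Sble d4(1) d3(1)])
      have CCe: "2*CAc gam bet alp K0 + \<bar>gam + bet + alp + 1\<bar> + 2*\<bar>K0\<bar> + 2*(\<bar>betn\<bar>+\<bar>K0\<bar>) + \<bar>betn\<bar> + 1
          = Cc gam bet alp betn K0" unfolding Cc_def by (simp add: add_ac)
      have "magAq no + magBv \<le> MAc p nh no h x"
      proof -
        have "magAq no \<le> (\<Sum>q=1..no. magAq q)" using qno magA0 by (intro member_le_sum) auto
        thus ?thesis unfolding MAc_is by linarith
      qed
      hence "(magAq no + magBv) * Cc gam bet alp betn K0 * eps\<^sup>2 \<le> K * eps\<^sup>2"
        unfolding K_def using C0 by (intro mult_right_mono) (auto intro: mult_right_mono)
      thus ?thesis using fs unfolding shat_no exact_no CCe magB_is[symmetric] by linarith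
    qed
    show ?thesis using part1 part2 unfolding magAq_def magBv_def K_def by blast
  next
    case False
    have F0: "\<forall>z\<in>F. z = 0"
    proof
      fix z assume z: "z \<in> F"
      have "dot_err F eps fdot (tcAT p 1) m alp K0" using dA no2 by auto
      hence "\<bar>(\<Sum>j=1..m. tcAT p 1 j * z) - fdot (tcAT p 1) m (\<lambda>_. z)\<bar>
         \<le> (\<Sum>j=1..m. \<bar>tcAT p 1 j\<bar> * \<bar>z\<bar>) * (alp*eps + K0*eps\<^sup>2)" using z unfolding dot_err_def by (elim allE[of _ "\<lambda>_. z"]) auto
      hence "0 \<le> (real m * \<bar>z\<bar>) * (alp*eps + K0*eps\<^sup>2)" by (simp add: tcAT_def)
      moreover have "alp*eps + K0*eps\<^sup>2 < 0" using False by simp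
      ultimately have "\<not> (real m * \<bar>z\<bar> > 0)" using mult_pos_neg by fastforce
      moreover have "real m > 0" using m1 by simp
      ultimately show "z = 0" by (metis zero_less_abs_iff mult_pos_pos)
    qed
    have hz: "h j = 0" if "j \<in> {1..nh}" for j using F0 hF that by blast
    have SGz: "SG j = 0" for j unfolding SG_def using hz by (auto intro!: sum.neutral)
    have Uz: "U j = 0" for j unfolding U_def using hz by (auto intro!: sum.neutral)
    have magAz: "magAq q = 0" for q unfolding magA_is SGz by simp
    have hnz: "h nh = 0" using hz nh1 by auto
    have magBz: "magBv = 0" unfolding magB_is hnz by simp
    have exz: "exact_s p nh no h x q = 0" for q unfolding exact_is Uz hnz by simp
    have shF: "shat fmul fadd fdot p nh no h x q \<in> F" if "q \<in> {1..no}" for q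
    proof -
      have fA: "fdot (tcAT p i) m w \<in> F" if "i \<in> {1..no}" for i
        using dA that wF unfolding dot_err_def by blast
      have "dot_err F eps fdot Bn (m+1) betn K0" using dN unfolding Bn_def by simp
      hence fvF: "fv \<in> F" using xF unfolding dot_err_def fv_def by blast
      have hnF: "h nh \<in> F" using hF nh1 by auto
      show ?thesis unfolding shat_is
        using fA[OF that] fA[of no] no2 fmulF[OF hnF fvF] faddF by auto
    qed
    have shz: "shat fmul fadd fdot p nh no h x q = 0" if "q \<in> {1..no}" for q using shF[OF that] F0 by blast
    have Ke: "0 \<le> K * eps\<^sup>2" using K0le by simp
    show ?thesis using Ke no2 unfolding magAq_def[symmetric] magBv_def[symmetric] K_def[symmetric] by (auto simp: shz exz magAz magBz)
  qed
qed



theorem mainTheorem5: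
  fixes p :: "nat \<Rightarrow> real" and nh no :: nat
    and h x :: "nat \<Rightarrow> real"
    and gam bet alp betn K0 :: real
  assumes "1 \<le> nh" and "2 \<le> no"
    and "inj_on p {1..no + nh - 2}"
  shows "\<exists>K eps0. 0 < eps0 \<and>
    (\<forall>F eps fmul fadd fdot.
       fp_model F eps fmul fadd \<and> eps \<le> eps0 \<and>
       (\<forall>j\<in>{1..nh}. h j \<in> F) \<and> (\<forall>j\<in>{1..no + nh - 1}. x j \<in> F) \<and>
       (\<forall>i\<in>{1..no + nh - 2}. dot_err F eps fdot (tcG p (no + nh - 2) i) nh gam K0) \<and>
       (\<forall>i\<in>{1..no + nh - 2}. dot_err F eps fdot (tcBT p (no + nh - 2) i) (no + nh - 2) bet K0) \<and>
       (\<forall>i\<in>{1..no}. dot_err F eps fdot (tcAT p i) (no + nh - 2) alp K0) \<and>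
       dot_err F eps fdot (tcBTm p (no + nh - 2) (no + nh - 1)) (no + nh - 1) betn K0
     \<longrightarrow>
       (\<forall>q\<in>{1..no - 1}.
          \<bar>shat fmul fadd fdot p nh no h x q - exact_s p nh no h x q\<bar>
            \<le> magA p nh no h x q * (gam + bet + alp + 1) * eps + K * eps\<^sup>2) \<and>
       \<bar>shat fmul fadd fdot p nh no h x no - exact_s p nh no h x no\<bar>
            \<le> (magA p nh no h x no + magB p nh no h x)
               * (max (gam + bet + alp + 1) (betn + 1) + 1) * eps + K * eps\<^sup>2)"
proof -
  show ?thesis
    apply (rule exI[of _ "MAc p nh no h x * Cc gam bet alp betn K0"], rule exI[of _ "1::real"])
    apply (rule conjI, simp)
    apply (intro allI impI)
    apply (elim conjE)
    apply (rule core[OF assms(1) assms(2)])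
    apply assumption+
    done
qed

end
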